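(* Let $F$ be a CNF formula over variables $x_1,\dots,x_n$ with clauses $C_1,\dots,C_m$ of two or three literals each. Let $R$ be the triple set and $H=(V,A)$ the hypergraph constructed from $F$ as described in the context. Let $A'\subseteq A$, and suppose $A'$ contains a cyclic path $P$ from $\alpha\beta$ to $c_{m+1}\gamma$. Then the triple set $\mathrm{triples}(A')$ is inconsistent.
   Context: **Triples and trees.** A rooted triple $pq|o$, with $p,q,o$ distinct leaves and unordered in $p,q$, is displayed by a rooted binary tree $T$ if the path from $p$ to $q$ is node-disjoint from the path from $o$ to the root. A triple set is consistent if some rooted binary tree displays all its triples, and inconsistent otherwise. **Triples and arcs.** The triple $pq|o$ corresponds to the hyperarc $\mathrm{arc}(pq|o)=\{p,q\}\to\{\{p,o\},\{q,o\}\}$, and $\mathrm{triples}(A')$ is the set of triples corresponding to arcs of $A'$. We write $pq$ for $\{p,q\}$. **Hypergraph notions.** A hyperarc $u\to\{v,v'\}$ has tail $u$ and heads $\{v,v'\}$. A path from $u_0$ to $u_\ell$ is a sequence of distinct arcs $(a_1,\dots,a_\ell)$ with $\mathrm{t}(a_1)=u_0$, $u_\ell\in\mathrm{h}(a_\ell)$, and $\mathrm{t}(a_{k+1})\in\mathrm{h}(a_k)$. An arc $a_k$ is a back-arc if some $k'<k$ has $\mathrm{t}(a_{k'})\in\mathrm{h}(a_k)$. The path is cyclic if it has a back-arc. **Construction.** Use leaves - $x_i^j,\bar x_i^j,y_i^j,\bar y_i^j$ for $i\in[n]$, $j\in[m]$; - $b_i,b'_i$ for $i\in[n+1]$; - $c_j,d_j$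 for $j\in[m]$; - $c_{m+1}$, and $\alpha,\beta,\gamma$. The triple set $R$ is the union of the following groups. (i) For each $i\in[n]$: - $b_ib'_i|x_i^1$ and $b'_ix_i^1|y_i^1$; - $x_i^jy_i^j|x_i^{j+1}$ and $y_i^jx_i^{j+1}|y_i^{j+1}$ for $1\le j\le m-1$; - $x_i^my_i^m|b_{i+1}$ and $y_i^mb_{i+1}|b'_{i+1}$. (ii) For each $i\in[n]$: - $b_ib'_i|\bar x_i^1$ and $b'_i\bar x_i^1|\bar y_i^1$; - $\bar x_i^j\bar y_i^j|\bar x_i^{j+1}$ and $\bar y_i^j\bar x_i^{j+1}|\bar y_i^{j+1}$ for $1\le j\le m-1$; - $\bar x_i^m\bar y_i^m|b_{i+1}$ and $\bar x_i^mb_{i+1}|b'_{i+1}$. (iii) For each clause $C_j$: - for each positive occurrence of $x_i$ in $C_j$, the triples $c_jd_j|x_i^j$, $c_jx_i^j|y_i^j$, $c_jy_i^j|c_{j+1}$; - for each negative occurrence of $x_i$ in $C_j$, the same triples with $\bar x_i^j,\bar y_i^j$ in place of $x_i^j,y_i^j$; - if $j<m$, the triple $c_jc_{j+1}|d_{j+1}$. (iv) Connecting triples: $\alpha\beta|b_1$, $\beta b_1|b'_1$, $b_{n+1}b'_{n+1}|c_1$, $b'_{n+1}c_1|d_1$, $c_mc_{m+1}|\gamma$. Then $A=\{\mathrm{arc}(t):t\in R\}$, and $V$ is the set of leaf pairs occurring in arcs of $A$. *)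

theory Defs
  imports Main "HOL-Library.Sublist"
begin

text \<open>X i j = x_i^j, XB i j = bar x_i^j, Y i j = y_i^j, YB i j = bar y_i^j,
  B i = b_i, B' i = b'_i, Cc j = c_j, D j = d_j.\<close>
datatype leaf = X nat nat | XB nat nat | Y nat nat | YB nat nat
  | B nat | B' nat | Cc nat | D nat | Alpha | Beta | Gamma

text \<open>A triple (p, q, r) stands for pq|r.\<close>
type_synonym triple = "leaf \<times> leaf \<times> leaf"

datatype 'a tree = Lf 'a | Nd "'a tree" "'a tree"

text \<open>Nodes are addressed by bool lists (path from the root); lpos t gives the
  leaves together with their addresses.\<close>
fun lpos :: "'a tree \<Rightarrow> ('a \<times> bool list) set" where
  "lpos (Lf a) = {(a, [])}"
| "lpos (Nd l r) = {(a, False # p) | a p. (a, p) \<in> lpos l}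
                 \<union> {(a, True # p) | a p. (a, p) \<in> lpos r}"

definition labels_distinct :: "'a tree \<Rightarrow> bool" where
  "labels_distinct t \<longleftrightarrow> (\<forall>a u v. (a, u) \<in> lpos t \<and> (a, v) \<in> lpos t \<longrightarrow> u = v)"

text \<open>Node set of the path between nodes u and v: ancestors of u or v that are
  not strictly above their lowest common ancestor.\<close>
definition path_nodes :: "bool list \<Rightarrow> bool list \<Rightarrow> bool list set" where
  "path_nodes u v = {w. (prefix w u \<or> prefix w v) \<and>
      \<not> (\<exists>w'. prefix w' u \<and> prefix w' v \<and> strict_prefix w w')}"

definition root_path_nodes :: "bool list \<Rightarrow> bool list set" where
  "root_path_nodes u = {w. prefix w u}"

definition displays :: "leaf tree \<Rightarrow> triple \<Rightarrow> bool" where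
  "displays t tr = (case tr of (p, q, r) \<Rightarrow>
     p \<noteq> q \<and> p \<noteq> r \<and> q \<noteq> r \<and>
     (\<exists>up uq uo. (p, up) \<in> lpos t \<and> (q, uq) \<in> lpos t \<and> (r, uo) \<in> lpos t \<and>
        path_nodes up uq \<inter> root_path_nodes uo = {}))"

definition consistent :: "triple set \<Rightarrow> bool" where
  "consistent S \<longleftrightarrow> (\<exists>t. labels_distinct t \<and> (\<forall>tr\<in>S. displays t tr))"

text \<open>Vertices are leaf pairs (2-element sets); a hyperarc is (tail, heads).\<close>
type_synonym hvert = "leaf set"
type_synonym harc = "hvert \<times> hvert set"

definition arc :: "triple \<Rightarrow> harc" where
  "arc tr = (case tr of (p, q, r) \<Rightarrow> ({p, q}, {{p, r}, {q, r}}))"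

definition tl_arc :: "harc \<Rightarrow> hvert" where "tl_arc a = fst a"
definition hd_arc :: "harc \<Rightarrow> hvert set" where "hd_arc a = snd a"

definition triples :: "harc set \<Rightarrow> triple set" where
  "triples A' = {(p, q, r). p \<noteq> q \<and> p \<noteq> r \<and> q \<noteq> r \<and> arc (p, q, r) \<in> A'}"

definition hpath :: "harc set \<Rightarrow> harc list \<Rightarrow> hvert \<Rightarrow> hvert \<Rightarrow> bool" where
  "hpath A' P u0 ul \<longleftrightarrow> P \<noteq> [] \<and> distinct P \<and> set P \<subseteq> A' \<and>
     tl_arc (P ! 0) = u0 \<and> ul \<in> hd_arc (last P) \<and>
     (\<forall>k. Suc k < length P \<longrightarrow> tl_arc (P ! Suc k) \<in> hd_arc (P ! k))"

definition back_arc :: "harc list \<Rightarrow> nat \<Rightarrow> bool" where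
  "back_arc P k \<longleftrightarrow> k < length P \<and> (\<exists>k'<k. tl_arc (P ! k') \<in> hd_arc (P ! k))"

definition cyclic :: "harc list \<Rightarrow> bool" where
  "cyclic P \<longleftrightarrow> (\<exists>k. back_arc P k)"

text \<open>A CNF formula with variables x_1..x_n and clauses C_1..C_m is given by
  cl :: nat => (nat * bool) set; literal (i, True) is x_i, (i, False) is not x_i.\<close>

definition R :: "nat \<Rightarrow> nat \<Rightarrow> (nat \<Rightarrow> (nat \<times> bool) set) \<Rightarrow> triple set" where
  "R n m cl =
     (\<Union>i\<in>{1..n}.
        {(B i, B' i, X i 1), (B' i, X i 1, Y i 1),
         (X i m, Y i m, B (Suc i)), (Y i m, B (Suc i), B' (Suc i))}
        \<union> (\<Union>j\<in>{1..m-1}. {(X i j, Y i j, X i (Suc j)), (Y i j, X i (Suc j), Y i (Suc j))}))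
   \<union> (\<Union>i\<in>{1..n}.
        {(B i, B' i, XB i 1), (B' i, XB i 1, YB i 1),
         (XB i m, YB i m, B (Suc i)), (XB i m, B (Suc i), B' (Suc i))}
        \<union> (\<Union>j\<in>{1..m-1}. {(XB i j, YB i j, XB i (Suc j)), (YB i j, XB i (Suc j), YB i (Suc j))}))
   \<union> (\<Union>j\<in>{1..m}.
        (\<Union>i\<in>{i. (i, True) \<in> cl j}.
           {(Cc j, D j, X i j), (Cc j, X i j, Y i j), (Cc j, Y i j, Cc (Suc j))})
        \<union> (\<Union>i\<in>{i. (i, False) \<in> cl j}.
           {(Cc j, D j, XB i j), (Cc j, XB i j, YB i j), (Cc j, YB i j, Cc (Suc j))})
        \<union> (if j < m then {(Cc j, Cc (Suc j), D (Suc j))} else {}))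
   \<union> {(Alpha, Beta, B 1), (Beta, B 1, B' 1), (B (Suc n), B' (Suc n), Cc 1),
      (B' (Suc n), Cc 1, D 1), (Cc m, Cc (Suc m), Gamma)}"

definition hA :: "nat \<Rightarrow> nat \<Rightarrow> (nat \<Rightarrow> (nat \<times> bool) set) \<Rightarrow> harc set" where
  "hA n m cl = arc ` R n m cl"

definition hV :: "nat \<Rightarrow> nat \<Rightarrow> (nat \<Rightarrow> (nat \<times> bool) set) \<Rightarrow> hvert set" where
  "hV n m cl = (\<Union>a\<in>hA n m cl. insert (tl_arc a) (hd_arc a))"

end

theory Submission
  imports Defs
begin

fun lcp :: "'a list \<Rightarrow> 'a list \<Rightarrow> 'a list" where
  "lcp (x # xs) (y # ys) = (if x = y then x # lcp xs ys else [])"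
| "lcp _ _ = []"

lemma lcp_pre1: "prefix (lcp xs ys) xs"
  by (induction xs ys rule: lcp.induct) auto

lemma lcp_pre2: "prefix (lcp xs ys) ys"
  by (induction xs ys rule: lcp.induct) auto

lemma lcp_max: "prefix w xs \<Longrightarrow> prefix w ys \<Longrightarrow> prefix w (lcp xs ys)"
proof (induction xs ys arbitrary: w rule: lcp.induct)
  case (1 x xs y ys)
  then show ?case by (cases w) auto
next
  case ("2_1" ys)
  then show ?case by simp
next
  case ("2_2" v va)
  then show ?case by simp
qed

lemma lcp_sym: "lcp xs ys = lcp ys xs"
  by (induction xs ys rule: lcp.induct) (auto elim: lcp.elims)

definition addr :: "leaf tree \<Rightarrow> leaf \<Rightarrow> bool list" where
  "addr t a = (THE u. (a, u) \<in> lpos t)"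

definition G :: "leaf tree \<Rightarrow> leaf \<Rightarrow> leaf \<Rightarrow> nat" where
  "G t p q = length (lcp (addr t p) (addr t q))"

definition FF :: "leaf tree \<Rightarrow> hvert \<Rightarrow> nat" where
  "FF t s = (THE k. \<exists>p q. s = {p, q} \<and> p \<noteq> q \<and> k = G t p q)"

lemma G_sym: "G t p q = G t q p"
  unfolding G_def by (simp add: lcp_sym)

lemma FF_eq: assumes "p \<noteq> q" shows "FF t {p, q} = G t p q"
  unfolding FF_def
proof (rule the_equality)
  show "\<exists>p' q'. {p, q} = {p', q'} \<and> p' \<noteq> q' \<and> G t p q = G t p' q'"
    using assms by blast
next
  fix k assume "\<exists>p' q'. {p, q} = {p', q'} \<and> p' \<noteq> q' \<and> k = G t p' q'"
  then obtain p' q' where "{p, q} = {p', q'}" "k = G t p' q'" by blast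
  then show "k = G t p q" using G_sym by (metis doubleton_eq_iff)
qed

lemma addr_eq: assumes "labels_distinct t" "(a, u) \<in> lpos t" shows "addr t a = u"
  unfolding addr_def
  using assms unfolding labels_distinct_def by (intro the_equality) blast+

lemma lcp_lt:
  assumes "\<not> prefix (lcp up uq) uo"
  shows "length (lcp up uo) < length (lcp up uq)"
proof -
  let ?w = "lcp up uq" and ?v = "lcp up uo"
  have "prefix ?w up" "prefix ?v up" by (rule lcp_pre1)+
  then have "prefix ?v ?w \<or> prefix ?w ?v" using prefix_same_cases by blast
  moreover have "\<not> prefix ?w ?v"
    using assms lcp_pre2[of up uo] by (meson prefix_order.trans)
  ultimately have "strict_prefix ?v ?w" by (auto simp: strict_prefix_def)
  then show ?thesis by (rule prefix_length_less)
qed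

lemma disp_lt:
  assumes ld: "labels_distinct t" and d: "displays t (p, q, r)"
  shows "G t p r < G t p q \<and> G t q r < G t p q"
proof -
  from d obtain up uq uo where pq: "p \<noteq> q" and
    l: "(p, up) \<in> lpos t" "(q, uq) \<in> lpos t" "(r, uo) \<in> lpos t" and
    e: "path_nodes up uq \<inter> root_path_nodes uo = {}"
    unfolding displays_def by auto
  have a: "addr t p = up" "addr t q = uq" "addr t r = uo"
    using addr_eq[OF ld] l by auto
  have "lcp up uq \<in> path_nodes up uq"
    unfolding path_nodes_def
    using lcp_pre1[of up uq] lcp_max[of _ up uq]
    by (auto simp: strict_prefix_def dest: prefix_order.antisym)
  with e have np: "\<not> prefix (lcp up uq) uo"
    unfolding root_path_nodes_def by blast
  have 1: "length (lcp up uo) < length (lcp up uq)" by (rule lcp_lt[OF np])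
  have np2: "\<not> prefix (lcp uq up) uo" using np lcp_sym by metis
  have 2: "length (lcp uq uo) < length (lcp uq up)" by (rule lcp_lt[OF np2])
  show ?thesis using 1 2 a unfolding G_def by (simp add: lcp_sym)
qed

lemma R_distinct: "(p, q, r) \<in> R n m cl \<Longrightarrow> p \<noteq> q \<and> p \<noteq> r \<and> q \<noteq> r"
  unfolding R_def by (auto split: if_splits)

lemma arc_dec:
  assumes ld: "labels_distinct t" and disp: "\<forall>tr\<in>triples A'. displays t tr"
    and sub: "A' \<subseteq> hA n m cl" and a: "a \<in> A'" and h: "h \<in> hd_arc a"
  shows "FF t h < FF t (tl_arc a)"
proof -
  from a sub obtain p q r where tr: "(p, q, r) \<in> R n m cl" and ae: "a = arc (p, q, r)"
    unfolding hA_def by auto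
  have dd: "p \<noteq> q" "p \<noteq> r" "q \<noteq> r" using R_distinct[OF tr] by auto
  have "(p, q, r) \<in> triples A'" unfolding triples_def using dd a ae by auto
  with disp have "displays t (p, q, r)" by blast
  from disp_lt[OF ld this] have lt: "G t p r < G t p q" "G t q r < G t p q" by auto
  have "h = {p, r} \<or> h = {q, r}" using h ae unfolding hd_arc_def arc_def by auto
  moreover have "tl_arc a = {p, q}" using ae unfolding tl_arc_def arc_def by auto
  ultimately show ?thesis using lt dd FF_eq by metis
qed

theorem lemma4:
  fixes n m :: nat and cl :: "nat \<Rightarrow> (nat \<times> bool) set"
    and A' :: "harc set" and P :: "harc list"
  assumes "1 \<le> m"
    and "\<forall>j\<in>{1..m}. card (cl j) = 2 \<or> card (cl j) = 3"
    and "\<forall>j\<in>{1..m}. \<forall>(i, s)\<in>cl j. i \<in> {1..n}"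
    and "A' \<subseteq> hA n m cl"
    and "hpath A' P {Alpha, Beta} {Cc (Suc m), Gamma}"
    and "cyclic P"
  shows "\<not> consistent (triples A')"
proof
  assume "consistent (triples A')"
  then obtain t where ld: "labels_distinct t" and disp: "\<forall>tr\<in>triples A'. displays t tr"
    unfolding consistent_def by blast
  define h where "h k = FF t (tl_arc (P ! k))" for k
  have inP: "k < length P \<Longrightarrow> P ! k \<in> A'" for k
    using assms(5) unfolding hpath_def by auto
  have step: "Suc k < length P \<Longrightarrow> h (Suc k) < h k" for k
    unfolding h_def
    using arc_dec[OF ld disp assms(4) inP] assms(5) unfolding hpath_def by auto
  have dec: "k' + Suc d < length P \<Longrightarrow> h (k' + Suc d) < h k'" for k' d
  proof (induction d)
    case 0 then show ?case using step by simp
  next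
    case (Suc d)
    then have "h (k' + Suc d) < h k'" by simp
    moreover have "h (Suc (k' + Suc d)) < h (k' + Suc d)" using step Suc.prems by simp
    ultimately show ?case by simp
  qed
  from assms(6) obtain k k' where k: "k < length P" "k' < k"
    and b: "tl_arc (P ! k') \<in> hd_arc (P ! k)"
    unfolding cyclic_def back_arc_def by auto
  have "h k' < h k" unfolding h_def using arc_dec[OF ld disp assms(4) inP[OF k(1)] b] .
  moreover have "h k < h k'" using dec[of k' "k - k' - 1"] k by simp
  ultimately show False by simp
qed

end
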